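(* Let $a,b$ be integers with $b>a>2$, and set $r:=\min\{\,b-1,\ (a-1)(\lfloor b/a\rfloor+1)\,\}$. Then for every integer $c\geq \operatorname{lcm}(a,b)-r$ there exists a tame polynomial automorphism $F$ of $\mathbb{C}^3$ with $\operatorname{mdeg}F=(a,b,c)$.
   Context: For a polynomial automorphism $F=(F_1,\ldots,F_n)$ of $\mathbb{C}^n$, its multidegree is $\operatorname{mdeg}F:=(\deg F_1,\ldots,\deg F_n)$, where $\deg$ is total degree. A map $F=(F_1,\ldots,F_n)$ is elementary if for some $j\leq n$ and some polynomial $g$ in $n-1$ variables, $F_j=X_j+g(X_1,\ldots,\widehat{X_j},\ldots,X_n)$ and $F_i=X_i$ for $i\neq j$. A polynomial automorphism is tame if it is a composition of invertible affine-linear maps and elementary maps. *)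

theory Defs
  imports "HOL-Analysis.Analysis"
begin

text \<open>Since C is infinite, polynomials and polynomial functions correspond bijectively.\<close>

definition poly3_deg_le :: "(complex^3 \<Rightarrow> complex) \<Rightarrow> nat \<Rightarrow> bool" where
  "poly3_deg_le f d \<longleftrightarrow> (\<exists>c :: nat \<Rightarrow> nat \<Rightarrow> nat \<Rightarrow> complex. \<forall>x.
     f x = (\<Sum>i\<le>d. \<Sum>j\<le>d. \<Sum>k\<le>d.
              if i + j + k \<le> d then c i j k * (x$1)^i * (x$2)^j * (x$3)^k else 0))"

definition is_poly3 :: "(complex^3 \<Rightarrow> complex) \<Rightarrow> bool" where
  "is_poly3 f \<longleftrightarrow> (\<exists>d. poly3_deg_le f d)"

text \<open>Total degree (the zero polynomial gets degree 0; irrelevant for automorphisms).\<close>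
definition tdeg3 :: "(complex^3 \<Rightarrow> complex) \<Rightarrow> nat" where
  "tdeg3 f = (LEAST d. poly3_deg_le f d)"

definition poly_map3 :: "(complex^3 \<Rightarrow> complex^3) \<Rightarrow> bool" where
  "poly_map3 F \<longleftrightarrow> (\<forall>i. is_poly3 (\<lambda>x. F x $ i))"

definition poly_aut3 :: "(complex^3 \<Rightarrow> complex^3) \<Rightarrow> bool" where
  "poly_aut3 F \<longleftrightarrow> poly_map3 F \<and> bij F \<and> poly_map3 (inv F)"

definition mdeg3 :: "(complex^3 \<Rightarrow> complex^3) \<Rightarrow> nat \<times> nat \<times> nat" where
  "mdeg3 F = (tdeg3 (\<lambda>x. F x $ 1), tdeg3 (\<lambda>x. F x $ 2), tdeg3 (\<lambda>x. F x $ 3))"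

definition affine_aut3 :: "(complex^3 \<Rightarrow> complex^3) \<Rightarrow> bool" where
  "affine_aut3 F \<longleftrightarrow> (\<exists>(A :: complex^3^3) b. invertible A \<and> F = (\<lambda>x. A *v x + b))"

definition elementary3 :: "(complex^3 \<Rightarrow> complex^3) \<Rightarrow> bool" where
  "elementary3 F \<longleftrightarrow> (\<exists>j g. is_poly3 g \<and>
      (\<forall>x y. (\<forall>i. i \<noteq> j \<longrightarrow> x$i = y$i) \<longrightarrow> g x = g y) \<and>
      F = (\<lambda>x. \<chi> i. if i = j then x$i + g x else x$i))"

inductive_set tame3 :: "(complex^3 \<Rightarrow> complex^3) set" where
  affine: "affine_aut3 F \<Longrightarrow> F \<in> tame3"
| elem: "elementary3 F \<Longrightarrow> F \<in> tame3"
| comp: "F \<in> tame3 \<Longrightarrow> G \<in> tame3 \<Longrightarrow> F \<circ> G \<in> tame3"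

end

theory Submission
  imports Defs "HOL-Computational_Algebra.Polynomial_FPS"
begin

definition mono3 :: "nat \<times> nat \<times> nat \<Rightarrow> complex^3 \<Rightarrow> complex" where
  "mono3 m x = (case m of (i,j,k) \<Rightarrow> (x$1)^i * (x$2)^j * (x$3)^k)"
definition deg3 :: "nat \<times> nat \<times> nat \<Rightarrow> nat" where
  "deg3 m = (case m of (i,j,k) \<Rightarrow> i+j+k)"
definition box3 :: "nat \<Rightarrow> (nat \<times> nat \<times> nat) set" where
  "box3 d = {..d} \<times> {..d} \<times> {..d}"

lemma finite_box3[simp]: "finite (box3 d)" by (simp add: box3_def)

lemma triple_sum: "(\<Sum>i\<le>d. \<Sum>j\<le>d. \<Sum>k\<le>d. G i j k) = (\<Sum>m\<in>box3 d. case m of (i,j,k) \<Rightarrow> G i j k)"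
  by (simp add: box3_def sum.cartesian_product)

lemma poly3_deg_le_alt:
  "poly3_deg_le f d \<longleftrightarrow> (\<exists>c. \<forall>x. f x = (\<Sum>m\<in>box3 d. if deg3 m \<le> d then c m * mono3 m x else 0))"
proof
  assume "poly3_deg_le f d"
  then obtain c where c: "\<forall>x. f x = (\<Sum>i\<le>d. \<Sum>j\<le>d. \<Sum>k\<le>d.
              if i + j + k \<le> d then c i j k * (x$1)^i * (x$2)^j * (x$3)^k else 0)"
    unfolding poly3_deg_le_def by blast
  show "\<exists>c. \<forall>x. f x = (\<Sum>m\<in>box3 d. if deg3 m \<le> d then c m * mono3 m x else 0)"
    apply (rule exI[of _ "\<lambda>(i,j,k). c i j k"])
    using c by (auto simp: triple_sum deg3_def mono3_def mult.assoc split: prod.splits intro!: sum.cong)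
next
  assume "\<exists>c. \<forall>x. f x = (\<Sum>m\<in>box3 d. if deg3 m \<le> d then c m * mono3 m x else 0)"
  then obtain c where c: "\<forall>x. f x = (\<Sum>m\<in>box3 d. if deg3 m \<le> d then c m * mono3 m x else 0)" by blast
  show "poly3_deg_le f d" unfolding poly3_deg_le_def
    apply (rule exI[of _ "\<lambda>i j k. c (i,j,k)"])
    using c by (auto simp: triple_sum deg3_def mono3_def mult.assoc split: prod.splits intro!: sum.cong)
qed

lemma gen0:
  assumes "finite A" "\<forall>m\<in>A. deg3 m \<le> d" "\<forall>x. f x = (\<Sum>m\<in>A. w m * mono3 m x)"
  shows "poly3_deg_le f d"
proof -
  have sub: "A \<subseteq> box3 d"
  proof
    fix m assume "m \<in> A" then have "deg3 m \<le> d" using assms by auto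
    then show "m \<in> box3 d" by (cases m) (auto simp: deg3_def box3_def)
  qed
  show ?thesis unfolding poly3_deg_le_alt
  proof (intro exI allI)
    fix x
    have "(\<Sum>m\<in>box3 d. if deg3 m \<le> d then (if m \<in> A then w m else 0) * mono3 m x else 0)
        = (\<Sum>m\<in>box3 d. if m \<in> A then w m * mono3 m x else 0)"
      using assms(2) by (intro sum.cong) auto
    also have "\<dots> = (\<Sum>m\<in>box3 d \<inter> A. w m * mono3 m x)"
      by (simp add: sum.inter_restrict)
    also have "box3 d \<inter> A = A" using sub by auto
    finally show "f x = (\<Sum>m\<in>box3 d. if deg3 m \<le> d then (if m \<in> A then w m else 0) * mono3 m x else 0)"
      using assms(3) by simp
  qed
qed

lemma gen1:
  assumes "finite I" "\<forall>i\<in>I. deg3 (mm i) \<le> d" "\<forall>x. f x = (\<Sum>i\<in>I. w i * mono3 (mm i) x)"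
  shows "poly3_deg_le f d"
proof (rule gen0[of "mm ` I" d f "\<lambda>n. \<Sum>i\<in>{i\<in>I. mm i = n}. w i"])
  show "finite (mm ` I)" using assms by auto
  show "\<forall>m\<in>mm ` I. deg3 m \<le> d" using assms by auto
  show "\<forall>x. f x = (\<Sum>m\<in>mm ` I. (\<Sum>i\<in>{i\<in>I. mm i = m}. w i) * mono3 m x)"
  proof
    fix x
    have "f x = (\<Sum>i\<in>I. w i * mono3 (mm i) x)" using assms by auto
    also have "\<dots> = (\<Sum>n\<in>mm ` I. \<Sum>i\<in>{i\<in>I. mm i = n}. w i * mono3 (mm i) x)"
      by (rule sum.image_gen[OF assms(1)])
    also have "\<dots> = (\<Sum>n\<in>mm ` I. (\<Sum>i\<in>{i\<in>I. mm i = n}. w i) * mono3 n x)"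
      by (auto simp: sum_distrib_right intro!: sum.cong)
    finally show "f x = (\<Sum>m\<in>mm ` I. (\<Sum>i\<in>{i\<in>I. mm i = m}. w i) * mono3 m x)" .
  qed
qed

lemma repr:
  assumes "poly3_deg_le f d"
  obtains c where "\<forall>x. f x = (\<Sum>m\<in>{m\<in>box3 d. deg3 m \<le> d}. c m * mono3 m x)"
proof -
  obtain c where c: "\<forall>x. f x = (\<Sum>m\<in>box3 d. if deg3 m \<le> d then c m * mono3 m x else 0)"
    using assms unfolding poly3_deg_le_alt by blast
  show ?thesis
    apply (rule that[of c])
    using c by (simp add: sum.inter_filter)
qed

lemma deg_le_mono:
  assumes "poly3_deg_le f d" "d \<le> d'" shows "poly3_deg_le f d'"
proof -
  obtain c where c: "\<forall>x. f x = (\<Sum>m\<in>{m\<in>box3 d. deg3 m \<le> d}. c m * mono3 m x)"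
    using repr[OF assms(1)] by blast
  show ?thesis by (rule gen0[OF _ _ c]) (use assms(2) in auto)
qed

definition madd :: "nat \<times> nat \<times> nat \<Rightarrow> nat \<times> nat \<times> nat \<Rightarrow> nat \<times> nat \<times> nat" where
  "madd m n = (case m of (i,j,k) \<Rightarrow> case n of (i',j',k') \<Rightarrow> (i+i',j+j',k+k'))"

lemma mono3_madd: "mono3 (madd m n) x = mono3 m x * mono3 n x"
  by (cases m; cases n) (simp add: mono3_def madd_def power_add algebra_simps)
lemma deg3_madd: "deg3 (madd m n) = deg3 m + deg3 n"
  by (cases m; cases n) (simp add: deg3_def madd_def)

lemma deg_le_add:
  assumes "poly3_deg_le f d" "poly3_deg_le g d" shows "poly3_deg_le (\<lambda>x. f x + g x) d"
proof -
  obtain c where c: "\<forall>x. f x = (\<Sum>m\<in>{m\<in>box3 d. deg3 m \<le> d}. c m * mono3 m x)"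
    using repr[OF assms(1)] by blast
  obtain c' where c': "\<forall>x. g x = (\<Sum>m\<in>{m\<in>box3 d. deg3 m \<le> d}. c' m * mono3 m x)"
    using repr[OF assms(2)] by blast
  show ?thesis
    by (rule gen0[of "{m\<in>box3 d. deg3 m \<le> d}" _ _ "\<lambda>m. c m + c' m"]) (auto simp: c c' sum.distrib distrib_right)
qed

lemma deg_le_mult:
  assumes "poly3_deg_le f d" "poly3_deg_le g e" shows "poly3_deg_le (\<lambda>x. f x * g x) (d+e)"
proof -
  obtain c where c: "\<forall>x. f x = (\<Sum>m\<in>{m\<in>box3 d. deg3 m \<le> d}. c m * mono3 m x)"
    using repr[OF assms(1)] by blast
  obtain c' where c': "\<forall>x. g x = (\<Sum>m\<in>{m\<in>box3 e. deg3 m \<le> e}. c' m * mono3 m x)"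
    using repr[OF assms(2)] by blast
  show ?thesis
  proof (rule gen1[of "{m\<in>box3 d. deg3 m \<le> d} \<times> {m\<in>box3 e. deg3 m \<le> e}" "\<lambda>(m,n). madd m n"
        _ _ "\<lambda>(m,n). c m * c' n"])
    show "\<forall>x. f x * g x = (\<Sum>i\<in>{m \<in> box3 d. deg3 m \<le> d} \<times> {m \<in> box3 e. deg3 m \<le> e}.
          (case i of (m, n) \<Rightarrow> c m * c' n) * mono3 (case i of (m, n) \<Rightarrow> madd m n) x)"
    proof
      fix x
      have "f x * g x = (\<Sum>m\<in>{m \<in> box3 d. deg3 m \<le> d}. \<Sum>n\<in>{m \<in> box3 e. deg3 m \<le> e}. (c m * mono3 m x) * (c' n * mono3 n x))"
        by (simp add: c c' sum_product)
      also have "\<dots> = (\<Sum>(m,n)\<in>{m \<in> box3 d. deg3 m \<le> d} \<times> {m \<in> box3 e. deg3 m \<le> e}. (c m * mono3 m x) * (c' n * mono3 n x))"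
        by (rule sum.cartesian_product)
      also have "\<dots> = (\<Sum>i\<in>{m \<in> box3 d. deg3 m \<le> d} \<times> {m \<in> box3 e. deg3 m \<le> e}.
          (case i of (m, n) \<Rightarrow> c m * c' n) * mono3 (case i of (m, n) \<Rightarrow> madd m n) x)"
        by (intro sum.cong) (auto simp: mono3_madd mult_ac)
      finally show "f x * g x = (\<Sum>i\<in>{m \<in> box3 d. deg3 m \<le> d} \<times> {m \<in> box3 e. deg3 m \<le> e}.
          (case i of (m, n) \<Rightarrow> c m * c' n) * mono3 (case i of (m, n) \<Rightarrow> madd m n) x)" .
    qed
  qed (auto simp: deg3_madd add_mono)
qed

inductive pf :: "(complex^3 \<Rightarrow> complex) \<Rightarrow> bool" where
  pf_const: "pf (\<lambda>x. k)"
| pf_coord: "pf (\<lambda>x. x$i)"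
| pf_add: "pf f \<Longrightarrow> pf g \<Longrightarrow> pf (\<lambda>x. f x + g x)"
| pf_mult: "pf f \<Longrightarrow> pf g \<Longrightarrow> pf (\<lambda>x. f x * g x)"

lemma pf_is_poly3: "pf f \<Longrightarrow> is_poly3 f"
proof (induction rule: pf.induct)
  case (pf_const k)
  show ?case unfolding is_poly3_def
    by (rule exI, rule gen0[of "{(0,0,0)}" 0 _ "\<lambda>_. k"]) (auto simp: deg3_def mono3_def)
next
  case (pf_coord i)
  have "i = 1 \<or> i = 2 \<or> i = 3" using exhaust_3 by blast
  then show ?case unfolding is_poly3_def
    apply (elim disjE)
    apply (rule exI, rule gen0[of "{(1,0,0)}" 1 _ "\<lambda>_. 1"]; simp add: deg3_def mono3_def)
    apply (rule exI, rule gen0[of "{(0,1,0)}" 1 _ "\<lambda>_. 1"]; simp add: deg3_def mono3_def)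
    apply (rule exI, rule gen0[of "{(0,0,1)}" 1 _ "\<lambda>_. 1"]; simp add: deg3_def mono3_def)
    done
next
  case (pf_add f g)
  then obtain d e where "poly3_deg_le f d" "poly3_deg_le g e" unfolding is_poly3_def by blast
  then have "poly3_deg_le f (max d e)" "poly3_deg_le g (max d e)" by (auto intro: deg_le_mono)
  then show ?case unfolding is_poly3_def by (blast intro: deg_le_add)
next
  case (pf_mult f g)
  then obtain d e where "poly3_deg_le f d" "poly3_deg_le g e" unfolding is_poly3_def by blast
  then show ?case unfolding is_poly3_def by (blast intro: deg_le_mult)
qed

lemma pf_diff: "pf f \<Longrightarrow> pf g \<Longrightarrow> pf (\<lambda>x. f x - g x)"
proof -
  assume "pf f" "pf g"
  then have "pf (\<lambda>x. f x + (-1) * g x)" by (intro pf_add pf_mult pf_const)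
  then show ?thesis by simp
qed

lemma pf_power: "pf f \<Longrightarrow> pf (\<lambda>x. f x ^ n)"
  by (induction n) (auto intro: pf_const pf_mult)

lemma pf_sum: "finite A \<Longrightarrow> (\<And>a. a \<in> A \<Longrightarrow> pf (f a)) \<Longrightarrow> pf (\<lambda>x. \<Sum>a\<in>A. f a x)"
  by (induction A rule: finite_induct) (auto intro: pf_const pf_add)

lemma pf_comp: "pf f \<Longrightarrow> (\<And>i. pf (\<lambda>x. G x $ i)) \<Longrightarrow> pf (\<lambda>x. f (G x))"
  by (induction rule: pf.induct) (auto intro: pf.intros)

definition sc :: "complex \<Rightarrow> complex^3 \<Rightarrow> complex^3" where "sc t x = (\<chi> i. t * x$i)"
lemma sc_nth[simp]: "sc t x $ i = t * x $ i" by (simp add: sc_def)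

definition sdeg_le :: "(complex^3 \<Rightarrow> complex) \<Rightarrow> nat \<Rightarrow> bool" where
  "sdeg_le f d \<longleftrightarrow> (\<forall>x. \<exists>p. degree p \<le> d \<and> (\<forall>t. f (sc t x) = poly p t))"

lemma sdeg_const: "sdeg_le (\<lambda>x. k) d"
  unfolding sdeg_le_def by (intro allI exI[of _ "[:k:]"]) auto

lemma sdeg_coord: "1 \<le> d \<Longrightarrow> sdeg_le (\<lambda>x. x$i) d"
  unfolding sdeg_le_def by (intro allI, rule_tac x="[:0, x$i:]" in exI) (auto simp: mult.commute)

lemma sdeg_mono: "sdeg_le f d \<Longrightarrow> d \<le> d' \<Longrightarrow> sdeg_le f d'"
  unfolding sdeg_le_def by (meson order_trans)

lemma sdeg_add: "sdeg_le f d \<Longrightarrow> sdeg_le g d \<Longrightarrow> sdeg_le (\<lambda>x. f x + g x) d"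
  unfolding sdeg_le_def
  by (metis (no_types, lifting) degree_add_le poly_add)

lemma sdeg_diff: "sdeg_le f d \<Longrightarrow> sdeg_le g d \<Longrightarrow> sdeg_le (\<lambda>x. f x - g x) d"
  unfolding sdeg_le_def
  by (metis (no_types, lifting) degree_diff_le poly_diff)

lemma sdeg_mult: "sdeg_le f d \<Longrightarrow> sdeg_le g e \<Longrightarrow> sdeg_le (\<lambda>x. f x * g x) (d + e)"
  unfolding sdeg_le_def
  by (metis (no_types, lifting) add_mono degree_mult_le order_trans poly_mult)

lemma sdeg_power: "sdeg_le f d \<Longrightarrow> sdeg_le (\<lambda>x. f x ^ n) (n * d)"
proof (induction n)
  case 0 then show ?case using sdeg_const[of 1 0] by simp
next
  case (Suc n) then show ?case using sdeg_mult[of f d "\<lambda>x. f x ^ n" "n*d"] by simp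
qed

lemma sdeg_sum: "finite A \<Longrightarrow> (\<And>a. a \<in> A \<Longrightarrow> sdeg_le (f a) d) \<Longrightarrow> sdeg_le (\<lambda>x. \<Sum>a\<in>A. f a x) d"
  by (induction A rule: finite_induct) (auto intro: sdeg_const sdeg_add)

lemma sdeg_cmult: "sdeg_le f d \<Longrightarrow> sdeg_le (\<lambda>x. k * f x) d"
  using sdeg_mult[OF sdeg_const[of k 0], of f d] by simp

lemma mono3_sc: "mono3 m (sc t x) = t ^ deg3 m * mono3 m x"
  by (cases m) (simp add: mono3_def deg3_def power_mult_distrib power_add)

lemma degree_sum_monom_le:
  assumes "finite A" "\<forall>j\<in>A. c j \<noteq> 0 \<longrightarrow> e j \<le> D"
  shows "degree (\<Sum>j\<in>A. monom (c j) (e j)) \<le> D"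
proof (rule degree_le, intro allI impI)
  fix n assume "D < n"
  have "coeff (\<Sum>j\<in>A. monom (c j) (e j)) n = (\<Sum>j\<in>A. if e j = n then c j else 0)"
    by (simp add: coeff_sum coeff_monom)
  also have "\<dots> = 0" using assms \<open>D < n\<close> by (intro sum.neutral) force
  finally show "coeff (\<Sum>j\<in>A. monom (c j) (e j)) n = 0" .
qed

lemma deg_le_imp_sdeg: "poly3_deg_le f d \<Longrightarrow> sdeg_le f d"
proof -
  assume "poly3_deg_le f d"
  then obtain c where c: "\<forall>x. f x = (\<Sum>m\<in>{m\<in>box3 d. deg3 m \<le> d}. c m * mono3 m x)"
    using repr by blast
  show "sdeg_le f d" unfolding sdeg_le_def
  proof
    fix x
    let ?p = "\<Sum>m\<in>{m\<in>box3 d. deg3 m \<le> d}. monom (c m * mono3 m x) (deg3 m)"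
    show "\<exists>p. degree p \<le> d \<and> (\<forall>t. f (sc t x) = poly p t)"
      by (rule exI[of _ ?p], rule conjI, rule degree_sum_monom_le)
        (auto simp: c poly_sum poly_monom mono3_sc mult_ac)
  qed
qed

lemma sdeg_imp_deg_le:
  assumes "poly3_deg_le f D" "sdeg_le f d" shows "poly3_deg_le f d"
proof -
  obtain c where c: "\<forall>x. f x = (\<Sum>m\<in>{m\<in>box3 D. deg3 m \<le> D}. c m * mono3 m x)"
    using repr[OF assms(1)] by blast
  define A where "A = {m\<in>box3 D. deg3 m \<le> D}"
  have finA: "finite A" by (simp add: A_def)
  show ?thesis
  proof (rule gen0[of "A \<inter> {m. deg3 m \<le> d}" d f c])
    show "finite (A \<inter> {m. deg3 m \<le> d})" using finA by simp
    show "\<forall>m\<in>A \<inter> {m. deg3 m \<le> d}. deg3 m \<le> d" by simp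
    show "\<forall>x. f x = (\<Sum>m\<in>A \<inter> {m. deg3 m \<le> d}. c m * mono3 m x)"
    proof
      fix x
      define p where "p = (\<Sum>m\<in>A. monom (c m * mono3 m x) (deg3 m))"
      have pp: "\<forall>t. f (sc t x) = poly p t"
        by (auto simp: c A_def p_def poly_sum poly_monom mono3_sc mult_ac)
      obtain q where q: "degree q \<le> d" "\<forall>t. f (sc t x) = poly q t"
        using assms(2) unfolding sdeg_le_def by blast
      have "poly p = poly q" using pp q by auto
      then have "p = q" by (simp add: poly_eq_poly_eq_iff)
      then have z: "coeff p n = 0" if "n > d" for n using q(1) that by (simp add: coeff_eq_0)
      have cp: "coeff p n = (\<Sum>m\<in>{m\<in>A. deg3 m = n}. c m * mono3 m x)" for n
        unfolding p_def coeff_sum coeff_monom using finA by (simp add: sum.inter_filter)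
      have "f x = (\<Sum>m\<in>A. c m * mono3 m x)" by (simp add: c A_def)
      also have "\<dots> = (\<Sum>m\<in>A \<inter> {m. deg3 m \<le> d}. c m * mono3 m x) + (\<Sum>m\<in>A - {m. deg3 m \<le> d}. c m * mono3 m x)"
        by (rule sum.Int_Diff[OF finA])
      also have "(\<Sum>m\<in>A - {m. deg3 m \<le> d}. c m * mono3 m x) = 
          (\<Sum>n\<in>deg3 ` (A - {m. deg3 m \<le> d}). \<Sum>m\<in>{m\<in>A - {m. deg3 m \<le> d}. deg3 m = n}. c m * mono3 m x)"
        by (rule sum.image_gen) (use finA in auto)
      also have "\<dots> = 0"
      proof (rule sum.neutral, rule ballI)
        fix n assume "n \<in> deg3 ` (A - {m. deg3 m \<le> d})"
        then have "n > d" by auto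
        then have "{m\<in>A - {m. deg3 m \<le> d}. deg3 m = n} = {m\<in>A. deg3 m = n}" by auto
        then show "(\<Sum>m\<in>{m\<in>A - {m. deg3 m \<le> d}. deg3 m = n}. c m * mono3 m x) = 0"
          using cp[of n] z[OF \<open>n > d\<close>] by simp
      qed
      finally show "f x = (\<Sum>m\<in>A \<inter> {m. deg3 m \<le> d}. c m * mono3 m x)" by simp
    qed
  qed
qed

lemma tdeg3_eq:
  assumes "pf f" "sdeg_le f d" "\<forall>t. f (sc t x) = poly p t" "coeff p d \<noteq> 0"
  shows "tdeg3 f = d"
proof -
  obtain D where D: "poly3_deg_le f D" using pf_is_poly3[OF assms(1)] unfolding is_poly3_def by blast
  have fd: "poly3_deg_le f d" by (rule sdeg_imp_deg_le[OF D assms(2)])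
  have no: "\<not> poly3_deg_le f d'" if "d' < d" for d'
  proof
    assume "poly3_deg_le f d'"
    then have "sdeg_le f d'" by (rule deg_le_imp_sdeg)
    then obtain q where q: "degree q \<le> d'" "\<forall>t. f (sc t x) = poly q t" unfolding sdeg_le_def by blast
    have "poly p = poly q" using q assms(3) by auto
    then have "p = q" by (simp add: poly_eq_poly_eq_iff)
    then have "coeff p d = 0" using q(1) that by (simp add: coeff_eq_0)
    then show False using assms(4) by simp
  qed
  show ?thesis unfolding tdeg3_def
    by (rule Least_equality[where P="\<lambda>d. poly3_deg_le f d", OF fd]) (use no in \<open>meson not_le\<close>)
qed

definition elm :: "3 \<Rightarrow> (complex^3 \<Rightarrow> complex) \<Rightarrow> complex^3 \<Rightarrow> complex^3" where
  "elm j g x = (\<chi> i. if i = j then x$i + g x else x$i)"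
definition indep :: "3 \<Rightarrow> (complex^3 \<Rightarrow> complex) \<Rightarrow> bool" where
  "indep j g \<longleftrightarrow> (\<forall>x y. (\<forall>i. i \<noteq> j \<longrightarrow> x$i = y$i) \<longrightarrow> g x = g y)"

lemma elm_nth: "elm j g x $ i = (if i = j then x$i + g x else x$i)"
  by (simp add: elm_def)

lemma elm_inv1: "indep j g \<Longrightarrow> elm j (\<lambda>x. - g x) (elm j g x) = x"
proof -
  assume "indep j g"
  then have "g (elm j g x) = g x" unfolding indep_def by (metis elm_nth)
  then show ?thesis by (simp add: vec_eq_iff elm_nth)
qed

lemma elm_inv2: "indep j g \<Longrightarrow> elm j g (elm j (\<lambda>x. - g x) x) = x"
proof -
  assume "indep j g"
  then have "g (elm j (\<lambda>x. - g x) x) = g x" unfolding indep_def by (metis elm_nth)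
  then show ?thesis by (simp add: vec_eq_iff elm_nth)
qed

lemma elm_bij: "indep j g \<Longrightarrow> bij (elm j g)"
  by (rule o_bij[of "elm j (\<lambda>x. - g x)"]) (auto simp: elm_inv1 elm_inv2 fun_eq_iff)

lemma elm_inv: "indep j g \<Longrightarrow> inv (elm j g) = elm j (\<lambda>x. - g x)"
  by (rule inv_unique_comp) (auto simp: elm_inv1 elm_inv2 fun_eq_iff)

definition pfmap :: "(complex^3 \<Rightarrow> complex^3) \<Rightarrow> bool" where
  "pfmap F \<longleftrightarrow> (\<forall>i. pf (\<lambda>x. F x $ i))"

lemma pfmap_elm: "pf g \<Longrightarrow> pfmap (elm j g)"
  unfolding pfmap_def elm_nth
  by (intro allI, case_tac "i = j") (auto intro: pf.intros)

lemma pfmap_comp: "pfmap F \<Longrightarrow> pfmap G \<Longrightarrow> pfmap (F \<circ> G)"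
  unfolding pfmap_def by (auto intro: pf_comp)

lemma pfmap_poly_map3: "pfmap F \<Longrightarrow> poly_map3 F"
  unfolding pfmap_def poly_map3_def by (auto intro: pf_is_poly3)

lemma elm_tame: "pf g \<Longrightarrow> indep j g \<Longrightarrow> elm j g \<in> tame3"
  apply (rule tame3.elem)
  unfolding elementary3_def
  apply (rule exI[of _ j], rule exI[of _ g])
  by (auto simp: pf_is_poly3 indep_def elm_def fun_eq_iff)

lemma three_elm:
  assumes "pf g1" "indep j1 g1" "pf g2" "indep j2 g2" "pf g3" "indep j3 g3"
  shows "poly_aut3 (elm j3 g3 \<circ> elm j2 g2 \<circ> elm j1 g1) \<and> (elm j3 g3 \<circ> elm j2 g2 \<circ> elm j1 g1) \<in> tame3"
proof
  have pn: "pf (\<lambda>x. - g x)" if "pf g" for g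
    using pf_mult[OF pf_const[of "-1"] that] by simp
  have b1: "bij (elm j1 g1)" "bij (elm j2 g2)" "bij (elm j3 g3)" using assms elm_bij by auto
  have bij: "bij (elm j3 g3 \<circ> elm j2 g2 \<circ> elm j1 g1)" using b1 by (intro bij_comp)
  have "inv (elm j3 g3 \<circ> elm j2 g2 \<circ> elm j1 g1) = inv (elm j1 g1) \<circ> inv (elm j3 g3 \<circ> elm j2 g2)"
    using b1 by (intro o_inv_distrib bij_comp)
  also have "\<dots> = inv (elm j1 g1) \<circ> (inv (elm j2 g2) \<circ> inv (elm j3 g3))"
    using b1 by (simp add: o_inv_distrib)
  finally have inv: "inv (elm j3 g3 \<circ> elm j2 g2 \<circ> elm j1 g1) =
      elm j1 (\<lambda>x. - g1 x) \<circ> (elm j2 (\<lambda>x. - g2 x) \<circ> elm j3 (\<lambda>x. - g3 x))"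
    using assms by (simp add: elm_inv)
  show "poly_aut3 (elm j3 g3 \<circ> elm j2 g2 \<circ> elm j1 g1)"
    unfolding poly_aut3_def inv
    using assms bij pn by (auto intro!: pfmap_poly_map3 pfmap_comp pfmap_elm)
  show "elm j3 g3 \<circ> elm j2 g2 \<circ> elm j1 g1 \<in> tame3"
    using assms by (intro tame3.comp elm_tame)
qed

definition beta :: "nat \<Rightarrow> nat \<Rightarrow> complex" where "beta a b = of_nat b / of_nat a"
definition Tf :: "nat \<Rightarrow> nat \<Rightarrow> complex \<Rightarrow> complex \<Rightarrow> complex" where
  "Tf a b x z = (\<Sum>j<b div a + 1. (beta a b gchoose j) * x^j * z^(b - a*j))"
definition tau :: "nat \<Rightarrow> nat \<Rightarrow> complex poly" where
  "tau a b = (\<Sum>j<b div a + 1. monom (beta a b gchoose j) j)"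
definition ap :: "nat \<Rightarrow> nat \<Rightarrow> nat" where "ap a b = a div gcd a b"
definition bp :: "nat \<Rightarrow> nat \<Rightarrow> nat" where "bp a b = b div gcd a b"
definition phi :: "nat \<Rightarrow> nat \<Rightarrow> complex poly" where
  "phi a b = tau a b ^ ap a b - [:1,1:] ^ bp a b"
definition Wf :: "nat \<Rightarrow> nat \<Rightarrow> complex \<Rightarrow> complex \<Rightarrow> complex" where
  "Wf a b x z = (Tf a b x z)^(ap a b) - (x + z^a)^(bp a b)"

lemma ab_facts:
  assumes "0 < a" "0 < b"
  shows "lcm a b = a * bp a b" "lcm a b = ap a b * b" "ap a b \<ge> 1" "bp a b \<ge> 1"
    "of_nat (ap a b) * beta a b = of_nat (bp a b)"
proof -
  let ?g = "gcd a b"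
  have g0: "?g > 0" using assms by simp
  have ga: "?g dvd a" and gb: "?g dvd b" by auto
  show "lcm a b = a * bp a b" unfolding lcm_nat_def bp_def using gb by (simp add: div_mult_swap)
  show "lcm a b = ap a b * b" unfolding lcm_nat_def ap_def using ga by (metis div_mult_swap mult.commute)
  have "gcd a b \<le> a" using assms(1) by (simp add: gcd_le1_nat)
  then show "ap a b \<ge> 1" unfolding ap_def using g0 div_greater_zero_iff[of a "gcd a b"] by linarith
  have "gcd a b \<le> b" using assms(2) by (simp add: gcd_le2_nat)
  then show "bp a b \<ge> 1" unfolding bp_def using g0 div_greater_zero_iff[of b "gcd a b"] by linarith
  have "a = ap a b * ?g" "b = bp a b * ?g" unfolding ap_def bp_def using ga gb by auto
  then have ea: "(of_nat a :: complex) = of_nat (ap a b) * of_nat ?g" and eb: "(of_nat b :: complex) = of_nat (bp a b) * of_nat ?g"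
    by (metis of_nat_mult)+
  have nz: "(of_nat (ap a b) * of_nat ?g :: complex) \<noteq> 0" using ea assms(1) by (metis of_nat_eq_0_iff not_gr0)
  have "of_nat (ap a b) * beta a b = (of_nat (bp a b) * (of_nat (ap a b) * of_nat ?g)) / (of_nat (ap a b) * of_nat ?g)"
    unfolding beta_def ea eb by (simp only: times_divide_eq_right mult_ac)
  also have "\<dots> = of_nat (bp a b)" using nz by (rule nonzero_mult_div_cancel_right)
  finally show "of_nat (ap a b) * beta a b = of_nat (bp a b)" .
qed

lemma fps_power_agree:
  assumes "\<forall>i<M. fps_nth F i = fps_nth G i" "j < M"
  shows "fps_nth (F ^ n) j = fps_nth (G ^ n) j"
  using assms(2)
proof (induction n arbitrary: j)
  case 0 then show ?case by simp
next
  case (Suc n)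
  have "fps_nth (F ^ Suc n) j = (\<Sum>i=0..j. fps_nth F i * fps_nth (F^n) (j - i))" by (simp add: fps_mult_nth)
  also have "\<dots> = (\<Sum>i=0..j. fps_nth G i * fps_nth (G^n) (j - i))"
    using Suc assms(1) by (intro sum.cong) auto
  also have "\<dots> = fps_nth (G ^ Suc n) j" by (simp add: fps_mult_nth)
  finally show ?case .
qed

lemma fps_of_poly_lin: "fps_of_poly [:1,1:] = (1 + fps_X :: complex fps)"
  by (rule fps_ext) (auto simp: coeff_pCons split: nat.splits)

lemma phi_low:
  assumes "0 < a" "0 < b" "j < b div a + 1"
  shows "coeff (phi a b) j = 0"
proof -
  let ?M = "b div a + 1"
  let ?B = "fps_binomial (beta a b)"
  have agree: "\<forall>i<?M. fps_nth (fps_of_poly (tau a b)) i = fps_nth ?B i"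
    by (auto simp: tau_def coeff_sum coeff_monom)
  have "coeff (phi a b) j = fps_nth (fps_of_poly (tau a b) ^ ap a b) j - fps_nth ((1 + fps_X) ^ bp a b) j"
    unfolding fps_of_poly_nth[symmetric] phi_def fps_of_poly_diff fps_of_poly_power fps_of_poly_lin fps_sub_nth ..
  also have "fps_nth (fps_of_poly (tau a b) ^ ap a b) j = fps_nth (?B ^ ap a b) j"
    by (rule fps_power_agree[OF agree assms(3)])
  also have "?B ^ ap a b = (1 + fps_X) ^ bp a b"
    unfolding fps_binomial_power ab_facts(5)[OF assms(1,2)] fps_binomial_of_nat ..
  finally show ?thesis by (simp only: diff_self)
qed

lemma degree_tau: "degree (tau a b) \<le> b div a"
  unfolding tau_def by (rule degree_sum_monom_le) auto

lemma degree_tau_pow_le: "degree (tau a b ^ ap a b) \<le> (b div a) * ap a b"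
proof -
  have "degree (tau a b ^ ap a b) \<le> degree (tau a b) * ap a b" by (rule degree_power_le)
  also have "\<dots> \<le> (b div a) * ap a b" by (rule mult_le_mono1[OF degree_tau])
  finally show ?thesis .
qed

lemma degree_tau_pow:
  assumes "0 < a" "0 < b" shows "a * degree (tau a b ^ ap a b) \<le> lcm a b"
proof -
  have "a * degree (tau a b ^ ap a b) \<le> a * ((b div a) * ap a b)"
    using degree_tau_pow_le by (rule mult_le_mono2)
  also have "\<dots> = (a * (b div a)) * ap a b" by (simp only: mult.assoc)
  also have "\<dots> \<le> b * ap a b" by (rule mult_le_mono1[OF times_div_less_eq_dividend])
  also have "\<dots> = lcm a b" using ab_facts(2)[OF assms] by (simp only: mult.commute)
  finally show ?thesis .
qed

lemma degree_phi:
  assumes "0 < a" "0 < b" shows "degree (phi a b) \<le> bp a b"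
proof -
  have "a * degree (tau a b ^ ap a b) \<le> a * bp a b" using degree_tau_pow[OF assms] ab_facts(1)[OF assms] by linarith
  then have 1: "degree (tau a b ^ ap a b) \<le> bp a b" using assms by (meson mult_le_cancel1)
  have 2: "degree ([:1,1:] ^ bp a b :: complex poly) \<le> bp a b"
    using degree_power_le[of "[:1,1::complex:]" "bp a b"] by simp
  show ?thesis unfolding phi_def using degree_diff_le[OF 1 2] .
qed

lemma coeff_phi_top:
  assumes "0 < a" "0 < b" "\<not> a dvd b"
  shows "coeff (phi a b) (bp a b) = -1"
proof -
  have "a * (b div a) < b" using assms
    by (metis dvd_triv_left le_neq_implies_less times_div_less_eq_dividend)
  then have "ap a b * (a * (b div a)) < ap a b * b" using ab_facts(3)[OF assms(1,2)] by simp
  moreover have "a * degree (tau a b ^ ap a b) \<le> ap a b * (a * (b div a))"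
  proof -
    have "a * degree (tau a b ^ ap a b) \<le> a * ((b div a) * ap a b)"
      using degree_tau_pow_le by (rule mult_le_mono2)
    then show ?thesis by (simp only: mult_ac)
  qed
  ultimately have "a * degree (tau a b ^ ap a b) < a * bp a b" using ab_facts(1,2)[OF assms(1,2)] by linarith
  then have "degree (tau a b ^ ap a b) < bp a b" by (meson nat_mult_less_cancel_disj)
  then have "coeff (tau a b ^ ap a b) (bp a b) = 0" by (simp add: coeff_eq_0)
  then show ?thesis by (simp add: phi_def coeff_linear_power)
qed

lemma zpow:
  fixes x z :: complex
  assumes "z \<noteq> 0" "a*j \<le> n"
  shows "z^n * (x / z^a)^j = x^j * z^(n - a*j)"
proof -
  define w where "w = z^(a*j)"
  have w0: "w \<noteq> 0" using assms(1) by (simp add: w_def)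
  have 1: "z^n = z^(n - a*j) * w" using assms(2) by (simp add: w_def power_add[symmetric])
  have 2: "(x / z^a)^j = x^j / w" unfolding w_def by (metis power_divide power_mult)
  show ?thesis unfolding 1 2 using w0 by simp
qed

lemma W_id:
  assumes "0 < a" "0 < b" "\<not> a dvd b"
  shows "Wf a b x z = (\<Sum>j\<le>bp a b. coeff (phi a b) j * x^j * z^(lcm a b - a*j))"
proof (cases "z = 0")
  case False
  define u where "u = x / z^a"
  define L where "L = lcm a b"
  have jle: "a * j \<le> b" if "j < b div a + 1" for j
  proof -
    have "a * j \<le> a * (b div a)" using that by simp
    also have "\<dots> \<le> b" by (rule times_div_less_eq_dividend)
    finally show ?thesis .
  qed
  have T: "Tf a b x z = z^b * poly (tau a b) u"
  proof -
    have "z^b * poly (tau a b) u = (\<Sum>j<b div a + 1. (beta a b gchoose j) * (z^b * u^j))"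
      unfolding tau_def poly_sum poly_monom sum_distrib_left by (simp add: mult_ac)
    also have "\<dots> = Tf a b x z" unfolding Tf_def u_def
      using zpow[OF False jle] by (intro sum.cong) (auto simp: mult_ac)
    finally show ?thesis by simp
  qed
  have P: "x + z^a = z^a * (1 + u)" using False by (simp add: u_def field_simps)
  have Lb: "L = b * ap a b" "L = a * bp a b" using ab_facts[OF assms(1,2)] by (auto simp: L_def mult.commute)
  have "Wf a b x z = (z^b * poly (tau a b) u)^(ap a b) - (z^a * (1+u)) ^ (bp a b)"
    unfolding Wf_def T P ..
  also have "\<dots> = z^L * (poly (tau a b) u ^ ap a b - (1+u) ^ (bp a b))"
    by (simp add: power_mult_distrib power_mult[symmetric] Lb[symmetric] right_diff_distrib)
  also have "poly (tau a b) u ^ ap a b - (1+u) ^ (bp a b) = poly (phi a b) u"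
    by (simp add: phi_def poly_power)
  also have "poly (phi a b) u = (\<Sum>j\<le>bp a b. coeff (phi a b) j * u^j)"
    by (subst poly_as_sum_of_monoms'[OF degree_phi[OF assms(1,2)], symmetric])
       (simp add: poly_sum poly_monom)
  also have "z^L * (\<Sum>j\<le>bp a b. coeff (phi a b) j * u^j) = (\<Sum>j\<le>bp a b. coeff (phi a b) j * (z^L * u^j))"
    by (simp add: sum_distrib_left mult_ac)
  also have "\<dots> = (\<Sum>j\<le>bp a b. coeff (phi a b) j * x^j * z^(L - a*j))"
    unfolding u_def using zpow[OF False, of a _ L] Lb(2) by (intro sum.cong) (auto simp: mult_ac)
  finally show ?thesis by (simp add: L_def)
next
  case True
  have lt: "a * j < b" if "j < b div a + 1" for j
  proof -
    have "a * j \<le> a * (b div a)" using that by simp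
    also have "\<dots> < b" using assms
      by (metis dvd_triv_left le_neq_implies_less times_div_less_eq_dividend)
    finally show ?thesis .
  qed
  have T0: "Tf a b x z = 0" unfolding Tf_def True using lt by (intro sum.neutral) auto
  have ap1: "ap a b \<ge> 1" using ab_facts[OF assms(1,2)] by simp
  have "Wf a b x z = - (x ^ (bp a b))" unfolding Wf_def T0 using True ap1 assms(1) by (simp add: power_0_left)
  also have "\<dots> = (\<Sum>j\<le>bp a b. if j = bp a b then coeff (phi a b) j * x^j else 0)"
    using coeff_phi_top[OF assms] by simp
  also have "\<dots> = (\<Sum>j\<le>bp a b. coeff (phi a b) j * x^j * z^(lcm a b - a*j))"
  proof (intro sum.cong refl)
    fix j assume "j \<in> {..bp a b}"
    then have "j \<le> bp a b" by simp
    then have "lcm a b - a*j = 0 \<longleftrightarrow> j = bp a b" using ab_facts(1)[OF assms(1,2)] assms(1) by auto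
    then show "(if j = bp a b then coeff (phi a b) j * x^j else 0) = coeff (phi a b) j * x^j * z^(lcm a b - a*j)"
      unfolding True by (auto simp: power_0_left)
  qed
  finally show ?thesis .
qed

lemma W_sdeg:
  assumes "0 < a" "0 < b" "\<not> a dvd b"
  shows "sdeg_le (\<lambda>v. Wf a b (v$1) (v$3)) (lcm a b - (a-1)*(b div a + 1))"
  unfolding sdeg_le_def
proof
  fix v :: "complex^3"
  define x where "x = v$1"
  define z where "z = v$3"
  define L where "L = lcm a b"
  define M where "M = b div a + 1"
  define p where "p = (\<Sum>j\<le>bp a b. monom (coeff (phi a b) j * x^j * z^(L - a*j)) (j + (L - a*j)))"
  have "degree p \<le> L - (a-1)*M" unfolding p_def
  proof (rule degree_sum_monom_le, simp, intro ballI impI)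
    fix j assume j: "j \<in> {..bp a b}" and nz: "coeff (phi a b) j * x ^ j * z ^ (L - a * j) \<noteq> 0"
    then have "coeff (phi a b) j \<noteq> 0" by auto
    then have jM: "M \<le> j" using phi_low[OF assms(1,2)] unfolding M_def by (meson not_le)
    have ajL: "a*j \<le> L" using j ab_facts(1)[OF assms(1,2)] by (simp add: L_def)
    have e1: "a*j = (a-1)*j + j" using assms(1) by (cases a) auto
    have e2: "(a-1)*M \<le> (a-1)*j" using jM by simp
    show "j + (L - a * j) \<le> L - (a - 1) * M" using e1 e2 ajL by linarith
  qed
  moreover have "\<forall>t. Wf a b (sc t v $ 1) (sc t v $ 3) = poly p t"
  proof
    fix t
    have "Wf a b (sc t v $ 1) (sc t v $ 3) = (\<Sum>j\<le>bp a b. coeff (phi a b) j * (t*x)^j * (t*z)^(L - a*j))"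
      unfolding W_id[OF assms] by (simp add: x_def z_def L_def)
    also have "\<dots> = poly p t"
      by (simp add: p_def poly_sum poly_monom power_mult_distrib power_add mult_ac)
    finally show "Wf a b (sc t v $ 1) (sc t v $ 3) = poly p t" .
  qed
  ultimately show "\<exists>p. degree p \<le> lcm a b - (a - 1) * (b div a + 1) \<and>
      (\<forall>t. Wf a b (sc t v $ 1) (sc t v $ 3) = poly p t)" unfolding L_def M_def by blast
qed

lemma W_zero:
  assumes "0 < a" "a dvd b"
  shows "Wf a b x z = 0"
proof -
  obtain k where b: "b = a * k" using assms(2) by blast
  have g: "gcd a b = a" using assms(2) by (simp add: gcd_nat.absorb1)
  have ap: "ap a b = 1" unfolding ap_def g using assms(1) by simp
  have bp: "bp a b = k" unfolding bp_def g b using assms(1) by simp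
  have beta: "beta a b = of_nat k" unfolding beta_def b using assms(1) by simp
  have bk: "b div a = k" unfolding b using assms(1) by simp
  have "Tf a b x z = (\<Sum>j\<le>k. of_nat (k choose j) * x^j * (z^a)^(k - j))"
    unfolding Tf_def bk beta lessThan_Suc_atMost[symmetric] Suc_eq_plus1
    by (intro sum.cong refl) (simp add: binomial_gbinomial b power_mult[symmetric] diff_mult_distrib2)
  also have "\<dots> = (x + z^a)^k" by (rule binomial_ring[symmetric])
  finally show ?thesis unfolding Wf_def ap bp by simp
qed

definition g1 :: "nat \<Rightarrow> nat \<Rightarrow> nat \<Rightarrow> complex^3 \<Rightarrow> complex" where
  "g1 a b e v = Tf a b (v$1) (v$3) + (v$3)^e"
definition g2 :: "nat \<Rightarrow> complex^3 \<Rightarrow> complex" where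
  "g2 a v = (v$3)^a"
definition g3 :: "nat \<Rightarrow> nat \<Rightarrow> nat \<Rightarrow> complex^3 \<Rightarrow> complex" where
  "g3 a b i v = (v$1)^i * ((v$2)^(ap a b) - (v$1)^(bp a b))"
definition Fm :: "nat \<Rightarrow> nat \<Rightarrow> nat \<Rightarrow> nat \<Rightarrow> complex^3 \<Rightarrow> complex^3" where
  "Fm a b i e = elm 3 (g3 a b i) \<circ> elm 1 (g2 a) \<circ> elm 2 (g1 a b e)"

definition Pf :: "nat \<Rightarrow> complex^3 \<Rightarrow> complex" where "Pf a v = v$1 + (v$3)^a"
definition Qf :: "nat \<Rightarrow> nat \<Rightarrow> nat \<Rightarrow> complex^3 \<Rightarrow> complex" where
  "Qf a b e v = v$2 + Tf a b (v$1) (v$3) + (v$3)^e"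
definition Rf :: "nat \<Rightarrow> nat \<Rightarrow> nat \<Rightarrow> nat \<Rightarrow> complex^3 \<Rightarrow> complex" where
  "Rf a b i e v = v$3 + (Pf a v)^i * ((Qf a b e v)^(ap a b) - (Pf a v)^(bp a b))"

lemma Fm_nth:
  "(\<lambda>v. Fm a b i e v $ 1) = Pf a" "(\<lambda>v. Fm a b i e v $ 2) = Qf a b e" "(\<lambda>v. Fm a b i e v $ 3) = Rf a b i e"
  by (auto simp: fun_eq_iff Fm_def elm_nth Pf_def Qf_def Rf_def g1_def g2_def g3_def add_ac)

lemma pf_Tf: "pf (\<lambda>v. Tf a b (v$1) (v$3))"
  unfolding Tf_def by (intro pf_sum pf_mult pf_power pf_const pf_coord) auto

lemma pf_P: "pf (Pf a)" unfolding Pf_def by (intro pf_add pf_power pf_coord)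
lemma pf_Q: "pf (Qf a b e)" unfolding Qf_def by (intro pf_add pf_power pf_coord pf_Tf)
lemma pf_R: "pf (Rf a b i e)" unfolding Rf_def
  by (intro pf_add pf_mult pf_diff pf_power pf_coord pf_P pf_Q)

lemma tame_aut: "poly_aut3 (Fm a b i e) \<and> Fm a b i e \<in> tame3"
  unfolding Fm_def
proof (rule three_elm)
  show "pf (g1 a b e)" unfolding g1_def by (intro pf_add pf_power pf_coord pf_Tf)
  show "pf (g2 a)" unfolding g2_def by (intro pf_add pf_power pf_coord)
  show "pf (g3 a b i)" unfolding g3_def by (intro pf_mult pf_diff pf_power pf_coord)
  show "indep 2 (g1 a b e)" unfolding indep_def g1_def by auto
  show "indep 1 (g2 a)" unfolding indep_def g2_def by auto
  show "indep 3 (g3 a b i)" unfolding indep_def g3_def by auto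
qed

definition x0 :: "complex^3" where "x0 = (\<chi> i. if i = 3 then 1 else 0)"
lemma x0_nth[simp]: "x0 $ 1 = 0" "x0 $ 2 = 0" "x0 $ 3 = 1" by (auto simp: x0_def)

lemma sdeg_coord_pow: "e \<le> D \<Longrightarrow> sdeg_le (\<lambda>x. x$i ^ e) D"
  using sdeg_mono[OF sdeg_power[OF sdeg_coord[of 1 i]], of e D] by simp

lemma T_x0: "Tf a b 0 z = z^b"
  unfolding Tf_def Suc_eq_plus1[symmetric] sum.lessThan_Suc_shift by simp

lemma T_sdeg: "0 < a \<Longrightarrow> sdeg_le (\<lambda>v. Tf a b (v$1) (v$3)) b"
  unfolding Tf_def
proof (rule sdeg_sum, simp)
  fix j assume "0 < a" "j \<in> {..<b div a + 1}"
  then have "a * j \<le> a * (b div a)" by simp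
  then have ajb: "a * j \<le> b" using times_div_less_eq_dividend le_trans by blast
  have "j \<le> a * j" using \<open>0 < a\<close> by simp
  then have le: "j * 1 + (b - a*j) * 1 \<le> b" using ajb by linarith
  show "sdeg_le (\<lambda>v. (beta a b gchoose j) * v $ 1 ^ j * v $ 3 ^ (b - a * j)) b"
    by (rule sdeg_mono[OF sdeg_mult[OF sdeg_cmult[OF sdeg_power[OF sdeg_coord]] sdeg_power[OF sdeg_coord]] le]) auto
qed

lemma P_deg: "0 < a \<Longrightarrow> tdeg3 (Pf a) = a"
proof (rule tdeg3_eq[where x=x0 and p="monom (1::complex) a", OF pf_P])
  assume a: "0 < a"
  show "sdeg_le (Pf a) a" unfolding Pf_def
    using a by (intro sdeg_add sdeg_coord sdeg_coord_pow) auto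
  show "\<forall>t. Pf a (sc t x0) = poly (monom 1 a) t" by (simp add: Pf_def poly_monom)
  show "coeff (monom 1 a) a \<noteq> (0::complex)" by simp
qed

lemma Q_deg:
  assumes "0 < a" "1 \<le> e" "e \<le> b" shows "tdeg3 (Qf a b e) = b"
proof (rule tdeg3_eq[where x=x0 and p="monom (1::complex) b + monom 1 e", OF pf_Q])
  show "sdeg_le (Qf a b e) b" unfolding Qf_def
    using assms by (intro sdeg_add sdeg_coord T_sdeg sdeg_coord_pow) auto
  show "\<forall>t. Qf a b e (sc t x0) = poly (monom 1 b + monom 1 e) t" by (simp add: Qf_def poly_monom T_x0)
  show "coeff (monom 1 b + monom 1 e) b \<noteq> (0::complex)" unfolding coeff_add coeff_monom by simp
qed

lemma S_sdeg: "1 \<le> e \<Longrightarrow> sdeg_le (\<lambda>v. v$2 + v$3^e) e"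
  by (intro sdeg_add sdeg_coord sdeg_coord_pow) auto

lemma QP_decomp:
  assumes "1 \<le> ap a b"
  shows "Qf a b e v ^ ap a b - Pf a v ^ bp a b =
    (\<Sum>k\<in>{1..ap a b}. of_nat (ap a b choose k) * (v$2 + v$3^e)^k * (Tf a b (v$1) (v$3))^(ap a b - k))
    + Wf a b (v$1) (v$3)"
proof -
  let ?n = "ap a b"
  let ?S = "v$2 + v$3^e" and ?T = "Tf a b (v$1) (v$3)"
  let ?f = "\<lambda>k. of_nat (?n choose k) * ?S^k * ?T^(?n - k)"
  have "Qf a b e v ^ ?n = (?S + ?T)^?n" by (simp add: Qf_def add_ac)
  also have "\<dots> = (\<Sum>k\<le>?n. ?f k)" by (rule binomial_ring)
  also have "\<dots> = ?f 0 + (\<Sum>k\<in>{..?n} - {0}. ?f k)" by (rule sum.remove) auto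
  also have "{..?n} - {0} = {1..?n}" by auto
  finally show ?thesis by (simp add: Wf_def Pf_def)
qed

lemma R_sdeg:
  assumes "0 < a" "a < b" "1 \<le> e" "e \<le> b" "sdeg_le (\<lambda>v. Wf a b (v$1) (v$3)) (e + lcm a b - b)"
  shows "sdeg_le (Rf a b i e) (a*i + (e + lcm a b - b))"
proof -
  let ?n = "ap a b" and ?L = "lcm a b"
  let ?d = "e + lcm a b - b"
  have b0: "0 < b" using assms by simp
  have n1: "1 \<le> ?n" and Ln: "?L = ?n * b" using ab_facts[OF assms(1) b0] by (auto simp: mult.commute)
  have G: "sdeg_le (\<lambda>v. Qf a b e v ^ ?n - Pf a v ^ bp a b) ?d"
    unfolding QP_decomp[OF n1]
  proof (rule sdeg_add[OF sdeg_sum assms(5)], simp)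
    fix k assume k: "k \<in> {1..?n}"
    then obtain k' where k': "k = Suc k'" by (cases k) auto
    have "k * e + (?n - k) * b \<le> ?d"
    proof -
      have f1: "k' * e \<le> k' * b" using assms(4) by (rule mult_le_mono2)
      have f2: "(?n - k) * b + k' * b = (?n - 1) * b" using k k' by (simp add: add_mult_distrib[symmetric])
      have f3: "(?n - 1) * b = ?L - b" using Ln by (simp add: diff_mult_distrib)
      have f4: "?L \<ge> b" using Ln n1 by simp
      have f5: "k * e = e + k' * e" using k' by simp
      show ?thesis using f1 f2 f3 f4 f5 by linarith
    qed
    then show "sdeg_le (\<lambda>v. of_nat (?n choose k) * (v$2 + v$3^e)^k * (Tf a b (v$1) (v$3))^(?n - k)) ?d"
      by (intro sdeg_mono[OF sdeg_mult[OF sdeg_cmult[OF sdeg_power[OF S_sdeg[OF assms(3)]]]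
            sdeg_power[OF T_sdeg[OF assms(1)]]]])
  qed
  have P: "sdeg_le (Pf a) a" unfolding Pf_def using assms(1) by (intro sdeg_add sdeg_coord sdeg_coord_pow) auto
  have "b \<le> ?L" using Ln n1 by simp
  then have "1 \<le> a*i + ?d" using assms(3) by linarith
  then show ?thesis unfolding Rf_def
    using sdeg_mono[OF sdeg_mult[OF sdeg_power[OF P, of i] G]]
    by (intro sdeg_add sdeg_coord) (auto simp: mult.commute)
qed

lemma aux_if: "(if P then 1 else 0) + (of_nat N :: complex) = of_nat ((if P then 1 else 0) + N)"
  by simp

lemma R_deg:
  assumes "0 < a" "a < b" "1 \<le> e" "e \<le> b" "sdeg_le (\<lambda>v. Wf a b (v$1) (v$3)) (e + lcm a b - b)"
  shows "tdeg3 (Rf a b i e) = a*i + (e + lcm a b - b)"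
proof -
  let ?n = "ap a b" and ?L = "lcm a b"
  let ?d = "e + lcm a b - b"
  have b0: "0 < b" using assms by simp
  have n1: "1 \<le> ?n" and Ln: "?L = ?n * b" and Lb: "?L = a * bp a b" using ab_facts[OF assms(1) b0] by (auto simp: mult.commute)
  define q where "q = (\<Sum>k\<in>{1..?n}. monom (of_nat (?n choose k) :: complex) (e*k + b*(?n-k)))"
  define pR where "pR = monom 1 1 + monom 1 (a*i) * q"
  show ?thesis
  proof (rule tdeg3_eq[where x=x0 and p=pR, OF pf_R R_sdeg[OF assms]])
    show "\<forall>t. Rf a b i e (sc t x0) = poly pR t"
    proof
      fix t :: complex
      have Q: "Qf a b e (sc t x0) = t^e + t^b" by (simp add: Qf_def T_x0)
      have P: "Pf a (sc t x0) = t^a" by (simp add: Pf_def)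
      have "(t^e + t^b)^?n = (\<Sum>k\<le>?n. of_nat (?n choose k) * (t^e)^k * (t^b)^(?n - k))"
        by (rule binomial_ring)
      also have "\<dots> = of_nat (?n choose 0) * (t^e)^0 * (t^b)^(?n - 0) + (\<Sum>k\<in>{..?n} - {0}. of_nat (?n choose k) * (t^e)^k * (t^b)^(?n - k))"
        by (rule sum.remove) auto
      also have "{..?n} - {0} = {1..?n}" by auto
      also have "(t^b)^(?n - 0) = (t^a)^bp a b"
        by (simp add: power_mult[symmetric] Lb[symmetric] Ln mult.commute)
      finally have bin: "(t^e + t^b)^?n - (t^a)^bp a b = (\<Sum>k\<in>{1..?n}. of_nat (?n choose k) * (t^e)^k * (t^b)^(?n - k))"
        by simp
      have "poly q t = (\<Sum>k\<in>{1..?n}. of_nat (?n choose k) * (t^e)^k * (t^b)^(?n - k))"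
        unfolding q_def poly_sum poly_monom by (intro sum.cong refl) (simp add: power_mult[symmetric] power_add mult_ac)
      then show "Rf a b i e (sc t x0) = poly pR t"
        unfolding Rf_def Q P pR_def using bin by (simp add: power_mult[symmetric] poly_monom)
    qed
    define N where "N = (\<Sum>k\<in>{1..?n}. if e*k + b*(?n-k) = ?d then ?n choose k else 0)"
    have cq: "coeff q ?d = of_nat N"
      unfolding q_def N_def coeff_sum coeff_monom of_nat_sum by (intro sum.cong refl) auto
    let ?f = "\<lambda>k. if e*k + b*(?n-k) = ?d then ?n choose k else 0"
    have f1: "?f 1 \<le> N" unfolding N_def by (rule member_le_sum) (use n1 in auto)
    have "b*(?n-1) = ?L - b" using Ln by (simp add: diff_mult_distrib2 mult.commute)
    moreover have "?L \<ge> b" using Ln n1 by simp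
    ultimately have "e*1 + b*(?n-1) = ?d" by simp
    then have "?n choose 1 \<le> N" using f1 by simp
    then have N1: "N \<ge> 1" using n1 by simp
    have c1: "coeff (monom 1 (a*i) * q) (a*i + ?d) = coeff q ?d" by (simp add: coeff_monom_mult)
    have c2: "coeff (monom (1::complex) 1) (a*i + ?d) = (if 1 = a*i + ?d then 1 else 0)" by (simp add: coeff_monom)
    have "coeff pR (a*i + ?d) = (if 1 = a*i + ?d then 1 else 0) + of_nat N"
      unfolding pR_def coeff_add c1 c2 cq ..
    also have "(if 1 = a*i + ?d then 1 else 0) + (of_nat N::complex) = of_nat ((if 1 = a*i + ?d then 1 else 0) + N)"
      by (rule aux_if)
    finally have "coeff pR (a*i + ?d) = of_nat ((if 1 = a*i + ?d then 1 else 0) + N)" .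
    moreover have "(if 1 = a*i + ?d then 1 else 0) + N \<noteq> 0" using N1 by simp
    ultimately show "coeff pR (a*i + ?d) \<noteq> 0" by (metis of_nat_eq_0_iff)
  qed
qed

theorem theorem1:
  fixes a b c :: nat
  assumes "2 < a" and "a < b"
    and "c \<ge> lcm a b - min (b - 1) ((a - 1) * (b div a + 1))"
  shows "\<exists>F. poly_aut3 F \<and> F \<in> tame3 \<and> mdeg3 F = (a, b, c)"
proof -
  define L where "L = lcm a b"
  define M where "M = b div a + 1"
  define r where "r = min (b - 1) ((a - 1) * M)"
  define d0 where "d0 = L - r"
  define i where "i = (c - d0) div a"
  define d where "d = c - a * i"
  define e where "e = d + b - L"
  have a0: "0 < a" and b0: "0 < b" using assms by auto
  have bL: "b \<le> L" unfolding L_def using b0 a0 by (intro dvd_imp_le) (auto simp: lcm_pos_nat)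
  have r1: "r \<le> b - 1" unfolding r_def by simp
  have r2: "r \<le> (a - 1) * M" unfolding r_def by simp
  have M1: "1 \<le> M" unfolding M_def by simp
  have "a - 1 \<le> (a - 1) * M" using M1 by simp
  then have r3: "a - 1 \<le> r" unfolding r_def using assms(2) by simp
  have cd0: "d0 \<le> c" using assms(3) unfolding d0_def L_def r_def M_def by simp
  have dm: "a * i + (c - d0) mod a = c - d0" unfolding i_def by (rule mult_div_mod_eq)
  have ml: "(c - d0) mod a < a" using a0 by simp
  have dd: "d = d0 + (c - d0) mod a" unfolding d_def using dm cd0 by linarith
  have d_lo: "d0 \<le> d" using dd by simp
  have d_hi: "d \<le> L" using dd ml r3 r1 bL unfolding d0_def by linarith
  have e1: "1 \<le> e" unfolding e_def using d_lo r1 bL b0 unfolding d0_def by linarith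
  have e2: "e \<le> b" unfolding e_def using d_hi by linarith
  have ed: "e + lcm a b - b = d" unfolding e_def L_def[symmetric] using d_lo r1 bL b0 unfolding d0_def by linarith
  have ca: "c = a * i + d" unfolding d_def using dm cd0 by linarith
  have W: "sdeg_le (\<lambda>v. Wf a b (v$1) (v$3)) (e + lcm a b - b)"
  proof (cases "a dvd b")
    case True
    then have "(\<lambda>v::complex^3. Wf a b (v$1) (v$3)) = (\<lambda>v. 0)" using W_zero[OF a0] by auto
    then show ?thesis by (simp add: sdeg_const)
  next
    case False
    have "L - (a-1)*M \<le> d" using d_lo r2 unfolding d0_def by linarith
    then show ?thesis unfolding ed
      using sdeg_mono[OF W_sdeg[OF a0 b0 False]] unfolding L_def M_def by blast
  qed
  have "poly_aut3 (Fm a b i e) \<and> Fm a b i e \<in> tame3" by (rule tame_aut)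
  moreover have "mdeg3 (Fm a b i e) = (a, b, c)"
    unfolding mdeg3_def Fm_nth P_deg[OF a0] Q_deg[OF a0 e1 e2] R_deg[OF a0 assms(2) e1 e2 W] ed ca ..
  ultimately show ?thesis by blast
qed

end
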